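(* Let $N$ be a finitely generated, semipositive binoid, $\mathfrak n$ an $N_+$-primary ideal of $N$ and $T$ a finitely generated $N$-set. Suppose there is a constant $C$ with $\operatorname{HKF}(\mathfrak n,N,q)\le Cq^{\dim N}$ for all $q\in\mathbb N_+$. Then there is a constant $\alpha$ with $\operatorname{HKF}(\mathfrak n,T,q)\le\alpha q^{\dim N}$ for all $q\in\mathbb N_+$.
   Context: A binoid $(N,+,0,\infty)$ is a commutative monoid $(N,+,0)$ with an element $\infty$ satisfying $a+\infty=\infty$ for all $a\in N$. Write $N^\times$ for the group of units of $N$ and $N_+=N\setminus N^\times$. $N$ is finitely generated if it is finitely generated as a monoid; semipositive if $N\neq\{\infty\}$ and $N^\times$ is finite. An ideal of $N$ is a nonempty subset $I\subseteq N$ with $I+N\subseteq I$ (so $\infty\in I$). For an ideal $I$ and $q\in\mathbb N_+$, $[q]I$ denotes the ideal generated by $\{qa: a\in I\}$. An ideal $\mathfrak n$ is $N_+$-primary if $\mathfrak n\subseteq N_+$ and for every $a\in N_+$ there is $k\ge1$ with $ka\in\mathfrak n$. A prime ideal is an ideal $\mathfrak p\neq N$ such that $a+b\in\mathfrak p$ implies $a\in\mathfrak p$ or $b\in\mathfrak p$; the (combinatorial) dimension $\dim N$ is the supremum of the lengths $k$ of chains $\mathfrak p_0\subsetneq\cdots\subsetneq\mathfrak p_k$ of prime ideals. An $N$-set is a pointed set $(S,p)$ with a map $N\times S\to S$, $(n,s)\mapsto n+s$, such that $(n+m)+s=n+(m+s)$, $0+s=s$, $\infty+s=p$ and $n+p=p$.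 It is finitely generated if there are $s_1,\dots,s_r\in S$ with $S=\bigcup_j (N+s_j)$. $N$ itself is an $N$-set with distinguished point $\infty$. For an ideal $J$ and an $N$-set $T$, $J+T=\{a+t:a\in J,t\in T\}$ is an $N$-subset; for an $N$-subset $S\subseteq T$ (a subset containing $p$ and stable under the action), the quotient $T/S$ is the $N$-set $(T\setminus S)\cup\{p\}$. For a finite pointed set $S$ we write $\#S=|S|-1$. For $N$ finitely generated and semipositive, $T$ a finitely generated $N$-set, $\mathfrak n$ an $N_+$-primary ideal and $q\in\mathbb N_+$, the Hilbert–Kunz function is $\operatorname{HKF}(\mathfrak n,T,q)=\#\,T/([q]\mathfrak n+T)$. *)

theory Defs
  imports Complex_Main
begin

text \<open>A binoid is represented by a carrier N, an operation f (written +),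
  a neutral element z (written 0) and an absorbing element w (written \<infinity>).\<close>

definition binoid :: "'a set \<Rightarrow> ('a \<Rightarrow> 'a \<Rightarrow> 'a) \<Rightarrow> 'a \<Rightarrow> 'a \<Rightarrow> bool" where
  "binoid N f z w \<longleftrightarrow>
     z \<in> N \<and> w \<in> N \<and> (\<forall>a\<in>N. \<forall>b\<in>N. f a b \<in> N) \<and>
     (\<forall>a\<in>N. \<forall>b\<in>N. \<forall>c\<in>N. f (f a b) c = f a (f b c)) \<and>
     (\<forall>a\<in>N. \<forall>b\<in>N. f a b = f b a) \<and>
     (\<forall>a\<in>N. f a z = a) \<and>
     (\<forall>a\<in>N. f a w = w)"

inductive_set monoid_gen :: "('a \<Rightarrow> 'a \<Rightarrow> 'a) \<Rightarrow> 'a \<Rightarrow> 'a set \<Rightarrow> 'a set"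
  for f :: "'a \<Rightarrow> 'a \<Rightarrow> 'a" and z :: 'a and G :: "'a set" where
  gen_zero: "z \<in> monoid_gen f z G"
| gen_base: "g \<in> G \<Longrightarrow> g \<in> monoid_gen f z G"
| gen_add: "a \<in> monoid_gen f z G \<Longrightarrow> b \<in> monoid_gen f z G \<Longrightarrow> f a b \<in> monoid_gen f z G"

definition binoid_fin_gen :: "'a set \<Rightarrow> ('a \<Rightarrow> 'a \<Rightarrow> 'a) \<Rightarrow> 'a \<Rightarrow> bool" where
  "binoid_fin_gen N f z \<longleftrightarrow> (\<exists>G. finite G \<and> G \<subseteq> N \<and> N = monoid_gen f z G)"

definition binoid_units :: "'a set \<Rightarrow> ('a \<Rightarrow> 'a \<Rightarrow> 'a) \<Rightarrow> 'a \<Rightarrow> 'a set" where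
  "binoid_units N f z = {a \<in> N. \<exists>b\<in>N. f a b = z}"

definition binoid_plus :: "'a set \<Rightarrow> ('a \<Rightarrow> 'a \<Rightarrow> 'a) \<Rightarrow> 'a \<Rightarrow> 'a set" where
  "binoid_plus N f z = N - binoid_units N f z"

definition semipositive :: "'a set \<Rightarrow> ('a \<Rightarrow> 'a \<Rightarrow> 'a) \<Rightarrow> 'a \<Rightarrow> 'a \<Rightarrow> bool" where
  "semipositive N f z w \<longleftrightarrow> N \<noteq> {w} \<and> finite (binoid_units N f z)"

primrec nsm :: "('a \<Rightarrow> 'a \<Rightarrow> 'a) \<Rightarrow> 'a \<Rightarrow> nat \<Rightarrow> 'a \<Rightarrow> 'a" where
  "nsm f z 0 a = z"
| "nsm f z (Suc k) a = f a (nsm f z k a)"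

definition binoid_ideal :: "'a set \<Rightarrow> ('a \<Rightarrow> 'a \<Rightarrow> 'a) \<Rightarrow> 'a set \<Rightarrow> bool" where
  "binoid_ideal N f I \<longleftrightarrow> I \<noteq> {} \<and> I \<subseteq> N \<and> (\<forall>a\<in>I. \<forall>n\<in>N. f a n \<in> I)"

text \<open>[q]I: the ideal generated by {q a : a \<in> I}, i.e. {q a + n : a \<in> I, n \<in> N}.\<close>
definition frob_ideal :: "'a set \<Rightarrow> ('a \<Rightarrow> 'a \<Rightarrow> 'a) \<Rightarrow> 'a \<Rightarrow> nat \<Rightarrow> 'a set \<Rightarrow> 'a set" where
  "frob_ideal N f z q I = {f (nsm f z q a) n | a n. a \<in> I \<and> n \<in> N}"

definition primary_ideal :: "'a set \<Rightarrow> ('a \<Rightarrow> 'a \<Rightarrow> 'a) \<Rightarrow> 'a \<Rightarrow> 'a set \<Rightarrow> bool" where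
  "primary_ideal N f z I \<longleftrightarrow> binoid_ideal N f I \<and> I \<subseteq> binoid_plus N f z \<and>
     (\<forall>a\<in>binoid_plus N f z. \<exists>k\<ge>1. nsm f z k a \<in> I)"

definition binoid_prime :: "'a set \<Rightarrow> ('a \<Rightarrow> 'a \<Rightarrow> 'a) \<Rightarrow> 'a set \<Rightarrow> bool" where
  "binoid_prime N f P \<longleftrightarrow> binoid_ideal N f P \<and> P \<noteq> N \<and>
     (\<forall>a\<in>N. \<forall>b\<in>N. f a b \<in> P \<longrightarrow> a \<in> P \<or> b \<in> P)"

definition prime_chain_lengths :: "'a set \<Rightarrow> ('a \<Rightarrow> 'a \<Rightarrow> 'a) \<Rightarrow> nat set" where
  "prime_chain_lengths N f = {k. \<exists>Ps :: 'a set list. length Ps = Suc k \<and>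
       (\<forall>i\<le>k. binoid_prime N f (Ps ! i)) \<and> (\<forall>i<k. Ps ! i \<subset> Ps ! Suc i)}"

text \<open>Combinatorial dimension (finite for finitely generated binoids).\<close>
definition binoid_dim :: "'a set \<Rightarrow> ('a \<Rightarrow> 'a \<Rightarrow> 'a) \<Rightarrow> nat" where
  "binoid_dim N f = Sup (prime_chain_lengths N f)"

definition nset :: "'a set \<Rightarrow> ('a \<Rightarrow> 'a \<Rightarrow> 'a) \<Rightarrow> 'a \<Rightarrow> 'a \<Rightarrow> 's set \<Rightarrow> 's \<Rightarrow> ('a \<Rightarrow> 's \<Rightarrow> 's) \<Rightarrow> bool" where
  "nset N f z w S p act \<longleftrightarrow> p \<in> S \<and> (\<forall>n\<in>N. \<forall>s\<in>S. act n s \<in> S) \<and>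
     (\<forall>n\<in>N. \<forall>m\<in>N. \<forall>s\<in>S. act (f n m) s = act n (act m s)) \<and>
     (\<forall>s\<in>S. act z s = s) \<and> (\<forall>s\<in>S. act w s = p) \<and> (\<forall>n\<in>N. act n p = p)"

definition nset_fin_gen :: "'a set \<Rightarrow> 's set \<Rightarrow> ('a \<Rightarrow> 's \<Rightarrow> 's) \<Rightarrow> bool" where
  "nset_fin_gen N S act \<longleftrightarrow> (\<exists>G. finite G \<and> G \<subseteq> S \<and> S = (\<Union>g\<in>G. {act n g | n. n \<in> N}))"

definition ideal_nset :: "'a set \<Rightarrow> 's set \<Rightarrow> ('a \<Rightarrow> 's \<Rightarrow> 's) \<Rightarrow> 's set" where
  "ideal_nset J S act = {act a t | a t. a \<in> J \<and> t \<in> S}"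

text \<open>HKF(n, T, q) = # T/([q]n + T) = |(T \ ([q]n + T)) \<union> {p}| - 1.\<close>
definition HKF :: "'a set \<Rightarrow> ('a \<Rightarrow> 'a \<Rightarrow> 'a) \<Rightarrow> 'a \<Rightarrow> 'a set \<Rightarrow> 's set \<Rightarrow> 's \<Rightarrow> ('a \<Rightarrow> 's \<Rightarrow> 's) \<Rightarrow> nat \<Rightarrow> nat" where
  "HKF N f z I S p act q =
     card ((S - ideal_nset (frob_ideal N f z q I) S act) \<union> {p}) - 1"

end

theory Submission imports Defs begin

lemma bin:
  assumes "binoid N f z w"
  shows "z \<in> N" "w \<in> N" "\<And>a b. a\<in>N \<Longrightarrow> b\<in>N \<Longrightarrow> f a b \<in> N"
    "\<And>a b c. a\<in>N \<Longrightarrow> b\<in>N \<Longrightarrow> c\<in>N \<Longrightarrow> f (f a b) c = f a (f b c)"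
    "\<And>a b. a\<in>N \<Longrightarrow> b\<in>N \<Longrightarrow> f a b = f b a"
    "\<And>a. a\<in>N \<Longrightarrow> f a z = a" "\<And>a. a\<in>N \<Longrightarrow> f z a = a"
  using assms unfolding binoid_def by metis+

lemma nsm_in: "binoid N f z w \<Longrightarrow> a \<in> N \<Longrightarrow> nsm f z k a \<in> N"
  by (induction k) (auto dest: bin)

lemma nsm_add: assumes "binoid N f z w" "a \<in> N"
  shows "nsm f z (m+n) a = f (nsm f z m a) (nsm f z n a)"
  using assms by (induction m) (auto simp: bin(4) nsm_in bin(7))

lemma nsm_mult: assumes "binoid N f z w" "a \<in> N"
  shows "nsm f z (m*n) a = nsm f z m (nsm f z n a)"
  using assms by (induction m) (auto simp: nsm_add)

definition Fc where "Fc f z gs c = foldr (\<lambda>g acc. f (nsm f z (c g) g) acc) gs z"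

lemma Fc_in: assumes "binoid N f z w" shows "set gs \<subseteq> N \<Longrightarrow> Fc f z gs c \<in> N"
  by (induction gs) (auto simp: Fc_def bin(3)[OF assms] nsm_in[OF assms] bin(1)[OF assms])

lemma swap4: assumes "binoid N f z w" "a\<in>N" "b\<in>N" "c\<in>N" "d\<in>N"
  shows "f (f a b) (f c d) = f (f a c) (f b d)"
proof -
  have "f (f a b) (f c d) = f a (f b (f c d))" using assms by (simp add: bin(3,4))
  also have "f b (f c d) = f c (f b d)"
  proof -
    have "f b (f c d) = f (f b c) d" using assms by (simp add: bin(4))
    also have "f b c = f c b" using assms by (simp add: bin(5))
    also have "f (f c b) d = f c (f b d)" using assms by (simp add: bin(4))
    finally show ?thesis .
  qed
  also have "f a (f c (f b d)) = f (f a c) (f b d)" using assms by (simp add: bin(3,4))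
  finally show ?thesis .
qed

lemma Fc_add: assumes "binoid N f z w" "set gs \<subseteq> N"
  shows "Fc f z gs (\<lambda>x. c1 x + c2 x) = f (Fc f z gs c1) (Fc f z gs c2)"
  using assms(2)
proof (induction gs)
  case Nil then show ?case using assms by (simp add: Fc_def bin(1,6))
next
  case (Cons g gs)
  then have g: "g \<in> N" and s: "set gs \<subseteq> N" by auto
  have "Fc f z (g#gs) (\<lambda>x. c1 x + c2 x) = f (f (nsm f z (c1 g) g) (nsm f z (c2 g) g)) (f (Fc f z gs c1) (Fc f z gs c2))"
    using Cons s g assms by (simp add: Fc_def nsm_add)
  also have "\<dots> = f (f (nsm f z (c1 g) g) (Fc f z gs c1)) (f (nsm f z (c2 g) g) (Fc f z gs c2))"
    by (rule swap4[OF assms(1)]) (use g s assms in \<open>auto simp: nsm_in Fc_in\<close>)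
  finally show ?case by (simp add: Fc_def)
qed

lemma Fc_cong: "\<forall>x\<in>set gs. c x = c' x \<Longrightarrow> Fc f z gs c = Fc f z gs c'"
  by (induction gs) (auto simp: Fc_def)

lemma Fc_zero: assumes "binoid N f z w" "set gs \<subseteq> N"
  shows "Fc f z gs (\<lambda>_. 0) = z"
  using assms(2) by (induction gs) (auto simp: Fc_def bin[OF assms(1)])

lemma Fc_single: assumes "binoid N f z w" "set gs \<subseteq> N" "distinct gs" "g \<in> set gs"
  shows "Fc f z gs (\<lambda>x. if x = g then m else 0) = nsm f z m g"
  using assms(2-4)
proof (induction gs)
  case Nil then show ?case by simp
next
  case (Cons h gs)
  show ?case
  proof (cases "h = g")
    case True
    then have "Fc f z gs (\<lambda>x. if x = g then m else 0) = Fc f z gs (\<lambda>_. 0)"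
      using Cons by (intro Fc_cong) auto
    then show ?thesis using True Cons assms(1) Fc_zero[OF assms(1)]
      by (simp add: Fc_def bin(6) nsm_in)
  next
    case False
    have "nsm f z m g \<in> N" using Cons assms(1) nsm_in by (metis subsetD)
    then show ?thesis using Cons assms(1) False
      by (simp add: Fc_def bin(7))
  qed
qed

lemma gen_Fc: assumes "binoid N f z w" "set gs \<subseteq> N" "distinct gs"
  and "n \<in> monoid_gen f z (set gs)"
  shows "\<exists>c. n = Fc f z gs c"
  using assms(4)
proof (induction rule: monoid_gen.induct)
  case gen_zero then show ?case using Fc_zero[OF assms(1,2)] by metis
next
  case (gen_base g)
  then have "g \<in> N" using assms by auto
  then have "Fc f z gs (\<lambda>x. if x = g then 1 else 0) = g"
    using Fc_single[OF assms(1-3) gen_base] by (simp add: bin(6)[OF assms(1)])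
  then show ?case by metis
next
  case (gen_add a b)
  then obtain c1 c2 where "a = Fc f z gs c1" "b = Fc f z gs c2" by blast
  then show ?case using Fc_add[OF assms(1,2)] by metis
qed

lemma unit_mult: assumes "binoid N f z w" "u \<in> binoid_units N f z" "v \<in> binoid_units N f z"
  shows "f u v \<in> binoid_units N f z"
proof -
  obtain b b' where "b\<in>N" "b'\<in>N" "u\<in>N" "v\<in>N" "f u b = z" "f v b' = z"
    using assms(2,3) unfolding binoid_units_def by auto
  then have "f (f u v) (f b b') = f (f u b) (f v b')" using swap4[OF assms(1)] by blast
  also have "\<dots> = z" using \<open>f u b = z\<close> \<open>f v b' = z\<close> bin(6)[OF assms(1) bin(1)[OF assms(1)]] by simp
  finally have "f (f u v) (f b b') = z" .
  then show ?thesis unfolding binoid_units_def using \<open>b\<in>N\<close> \<open>b'\<in>N\<close> \<open>u\<in>N\<close> \<open>v\<in>N\<close>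
    bin(3)[OF assms(1)] by blast
qed

lemma z_unit: "binoid N f z w \<Longrightarrow> z \<in> binoid_units N f z"
proof -
  assume a: "binoid N f z w"
  have "z \<in> N" "f z z = z" using bin(1)[OF a] bin(6)[OF a] by auto
  then show ?thesis unfolding binoid_units_def by blast
qed

lemma Fc_unit: assumes "binoid N f z w" "\<forall>g\<in>set gs. nsm f z (c g) g \<in> binoid_units N f z"
  shows "Fc f z gs c \<in> binoid_units N f z"
  using assms(2)
proof (induction gs)
  case Nil then show ?case using z_unit[OF assms(1)] by (simp add: Fc_def)
next
  case (Cons g gs)
  then have "nsm f z (c g) g \<in> binoid_units N f z" "Fc f z gs c \<in> binoid_units N f z" by auto
  from unit_mult[OF assms(1) this] show ?case by (simp add: Fc_def)
qed


lemma nsm_unit: assumes B: "binoid N f z w" shows "u \<in> binoid_units N f z \<Longrightarrow> nsm f z k u \<in> binoid_units N f z"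
  by (induction k) (simp_all add: z_unit[OF B] unit_mult[OF B])

lemma frob_mem:
  assumes B: "binoid N f z w" and gs: "set gs \<subseteq> N" "distinct gs" "g \<in> set gs"
    and kI: "nsm f z k g \<in> I" and le: "q * k \<le> c g" and IN: "I \<subseteq> N"
  shows "Fc f z gs c \<in> frob_ideal N f z q I"
proof -
  define c' where "c' = c(g := c g - q*k)"
  have ceq: "c = (\<lambda>x. c' x + (if x = g then q*k else 0))"
    using le by (auto simp: c'_def)
  have gN: "g \<in> N" using gs by auto
  have "Fc f z gs c = f (Fc f z gs c') (nsm f z (q*k) g)"
    using Fc_add[OF B gs(1), of c' "\<lambda>x. if x = g then q*k else 0"] Fc_single[OF B gs]
    ceq by simp
  also have "\<dots> = f (nsm f z q (nsm f z k g)) (Fc f z gs c')"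
    using bin(5)[OF B] Fc_in[OF B gs(1)] nsm_in[OF B gN] nsm_mult[OF B gN] by (metis mult.commute)
  finally show ?thesis unfolding frob_ideal_def using kI Fc_in[OF B gs(1)] by blast
qed

lemma ideal_eq:
  assumes B: "binoid N f z w" and IN: "I \<subseteq> N"
  shows "ideal_nset (frob_ideal N f z q I) N f = frob_ideal N f z q I"
proof
  show "ideal_nset (frob_ideal N f z q I) N f \<subseteq> frob_ideal N f z q I"
  proof
    fix x assume "x \<in> ideal_nset (frob_ideal N f z q I) N f"
    then obtain a n t where x: "x = f (f (nsm f z q a) n) t" "a \<in> I" "n \<in> N" "t \<in> N"
      unfolding ideal_nset_def frob_ideal_def by blast
    then have "nsm f z q a \<in> N" using nsm_in[OF B] IN by blast
    then have "x = f (nsm f z q a) (f n t)" using x bin(4)[OF B] by simp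
    moreover have "f n t \<in> N" using x bin(3)[OF B] by simp
    ultimately show "x \<in> frob_ideal N f z q I" unfolding frob_ideal_def using x by blast
  qed
next
  show "frob_ideal N f z q I \<subseteq> ideal_nset (frob_ideal N f z q I) N f"
  proof
    fix x assume x: "x \<in> frob_ideal N f z q I"
    then have "x \<in> N" unfolding frob_ideal_def using nsm_in[OF B] IN bin(3)[OF B] by blast
    then have "x = f x z" using bin(6)[OF B] by simp
    then show "x \<in> ideal_nset (frob_ideal N f z q I) N f"
      unfolding ideal_nset_def using x bin(1)[OF B] by blast
  qed
qed

lemma fin_compl:
  assumes B: "binoid N f z w" and FG: "binoid_fin_gen N f z" and SP: "semipositive N f z w"
    and PI: "primary_ideal N f z I"
  shows "finite (N - frob_ideal N f z q I)"
proof -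
  obtain G where G: "finite G" "G \<subseteq> N" "N = monoid_gen f z G"
    using FG unfolding binoid_fin_gen_def by blast
  obtain gs where gs: "set gs = G" "distinct gs" using G(1) finite_distinct_list by blast
  have gsN: "set gs \<subseteq> N" using gs G by auto
  define U where "U = binoid_units N f z"
  have Ufin: "finite U" using SP unfolding semipositive_def U_def by simp
  have IN: "I \<subseteq> N" using PI unfolding primary_ideal_def binoid_ideal_def by blast
  define kk where "kk g = (SOME k. k \<ge> 1 \<and> nsm f z k g \<in> I)" for g
  have kk: "nsm f z (kk g) g \<in> I" if "g \<in> set gs" "g \<notin> U" for g
  proof -
    have "g \<in> binoid_plus N f z" using that gsN unfolding binoid_plus_def U_def by auto
    then have "\<exists>k. k \<ge> 1 \<and> nsm f z k g \<in> I" using PI unfolding primary_ideal_def by blast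
    then show ?thesis unfolding kk_def by (metis (mono_tags, lifting) someI_ex)
  qed
  define K where "K = q * sum kk (set gs) + 1"
  define CS where "CS = {c::'a\<Rightarrow>nat. \<forall>x. (x \<in> set gs \<longrightarrow> c x \<in> {..<K}) \<and> (x \<notin> set gs \<longrightarrow> c x = 0)}"
  have CSfin: "finite CS" unfolding CS_def by (rule finite_set_of_finite_funs) auto
  have "N - frob_ideal N f z q I \<subseteq> (\<lambda>(u,c). f u (Fc f z gs c)) ` (U \<times> CS)"
  proof
    fix n assume n: "n \<in> N - frob_ideal N f z q I"
    then obtain c where c: "n = Fc f z gs c"
      using gen_Fc[OF B gsN gs(2)] G(3) gs(1) by blast
    define cu where "cu x = (if x \<in> U then c x else 0)" for x
    define c' where "c' x = (if x \<in> U then 0 else c x)" for x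
    define cn where "cn x = (if x \<in> set gs \<and> x \<notin> U then c x else 0)" for x
    have "c = (\<lambda>x. cu x + c' x)" unfolding cu_def c'_def by auto
    then have "n = f (Fc f z gs cu) (Fc f z gs c')" using c Fc_add[OF B gsN] by metis
    moreover have "Fc f z gs c' = Fc f z gs cn" by (rule Fc_cong) (auto simp: c'_def cn_def)
    moreover have "Fc f z gs cu \<in> U"
      unfolding U_def
    proof (rule Fc_unit[OF B], rule ballI)
      fix g assume "g \<in> set gs"
      show "nsm f z (cu g) g \<in> binoid_units N f z"
      proof (cases "g \<in> U")
        case True
        then show ?thesis using nsm_unit[OF B] U_def by (simp add: cu_def)
      next
        case False then show ?thesis using z_unit[OF B] by (simp add: cu_def)
      qed
    qed
    moreover have "cn \<in> CS"
    proof -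
      have "cn x < K" if "x \<in> set gs" for x
      proof (cases "x \<in> U")
        case False
        have "\<not> q * kk x \<le> c x"
          using frob_mem[OF B gsN gs(2) that kk[OF that False] _ IN] n c by blast
        then have "c x < q * kk x" by simp
        also have "kk x \<le> sum kk (set gs)" using that by (simp add: member_le_sum)
        then have "q * kk x \<le> q * sum kk (set gs)" by simp
        finally show ?thesis using False that by (simp add: cn_def K_def)
      qed (simp add: cn_def K_def)
      then show ?thesis unfolding CS_def by (auto simp: cn_def)
    qed
    ultimately show "n \<in> (\<lambda>(u,c). f u (Fc f z gs c)) ` (U \<times> CS)" by force
  qed
  moreover have "finite ((\<lambda>(u,c). f u (Fc f z gs c)) ` (U \<times> CS))" using Ufin CSfin by simp
  ultimately show ?thesis by (rule finite_subset)
qed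


theorem mainTheorem12:
  fixes N :: "'a set" and f :: "'a \<Rightarrow> 'a \<Rightarrow> 'a" and z w :: 'a
    and I :: "'a set" and T :: "'s set" and p :: 's and act :: "'a \<Rightarrow> 's \<Rightarrow> 's"
    and C :: real
  assumes "binoid N f z w" and "binoid_fin_gen N f z" and "semipositive N f z w"
    and "primary_ideal N f z I"
    and "nset N f z w T p act" and "nset_fin_gen N T act"
    and "\<forall>q::nat. q \<ge> 1 \<longrightarrow>
           real (HKF N f z I N w f q) \<le> C * real q ^ binoid_dim N f"
  shows "\<exists>\<alpha>::real. \<forall>q::nat. q \<ge> 1 \<longrightarrow>
           real (HKF N f z I T p act q) \<le> \<alpha> * real q ^ binoid_dim N f"
proof -
  note B = assms(1)
  obtain GT where GT: "finite GT" "GT \<subseteq> T" "T = (\<Union>g\<in>GT. {act n g | n. n \<in> N})"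
    using assms(6) unfolding nset_fin_gen_def by blast
  define r where "r = card GT"
  define d where "d = binoid_dim N f"
  have IN: "I \<subseteq> N" using assms(4) unfolding primary_ideal_def binoid_ideal_def by blast
  have "\<forall>q::nat. q \<ge> 1 \<longrightarrow> real (HKF N f z I T p act q) \<le> (real r * (C + 1)) * real q ^ d"
  proof (intro allI impI)
    fix q :: nat assume q: "q \<ge> 1"
    define X where "X = N - frob_ideal N f z q I"
    have Xfin: "finite X" unfolding X_def using fin_compl[OF assms(1-4)] .
    have HN: "HKF N f z I N w f q = card (X \<union> {w}) - 1"
      unfolding HKF_def X_def ideal_eq[OF B IN] by simp
    have "card X \<le> card (X \<union> {w})" using Xfin by (intro card_mono) auto
    then have cX: "card X \<le> HKF N f z I N w f q + 1" using HN by simp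
    define J where "J = ideal_nset (frob_ideal N f z q I) T act"
    have sub: "T - J \<subseteq> (\<lambda>(n,g). act n g) ` (X \<times> GT)"
    proof
      fix t assume t: "t \<in> T - J"
      then obtain g n where gn: "g \<in> GT" "n \<in> N" "t = act n g" using GT(3) by blast
      have "n \<notin> frob_ideal N f z q I"
      proof
        assume "n \<in> frob_ideal N f z q I"
        then have "t \<in> J" unfolding J_def ideal_nset_def using gn GT(2) by blast
        then show False using t by blast
      qed
      then have "(n, g) \<in> X \<times> GT" using gn unfolding X_def by blast
      moreover have "t = (\<lambda>(n,g). act n g) (n, g)" using gn by simp
      ultimately show "t \<in> (\<lambda>(n,g). act n g) ` (X \<times> GT)" by (rule rev_image_eqI)
    qed
    have fin2: "finite ((\<lambda>(n,g). act n g) ` (X \<times> GT))" using Xfin GT(1) by simp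
    have "card (T - J) \<le> card ((\<lambda>(n,g). act n g) ` (X \<times> GT))"
      by (rule card_mono[OF fin2 sub])
    also have "\<dots> \<le> card (X \<times> GT)" by (rule card_image_le) (use Xfin GT(1) in simp)
    also have "\<dots> = card X * r" by (simp add: r_def card_cartesian_product)
    finally have cTJ: "card (T - J) \<le> card X * r" .
    have "card ((T - J) \<union> {p}) \<le> card (T - J) + card {p}" by (rule card_Un_le)
    then have "HKF N f z I T p act q \<le> card (T - J)" unfolding HKF_def J_def by simp
    also have "\<dots> \<le> (HKF N f z I N w f q + 1) * r" using cTJ cX
      by (meson le_trans mult_le_mono1)
    finally have "real (HKF N f z I T p act q) \<le> real ((HKF N f z I N w f q + 1) * r)"
      by (simp only: of_nat_le_iff)
    then have h1: "real (HKF N f z I T p act q) \<le> (real (HKF N f z I N w f q) + 1) * real r"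
      by (simp add: algebra_simps)
    have h2: "real (HKF N f z I N w f q) \<le> C * real q ^ d" using assms(7) q d_def by blast
    have h3: "1 \<le> real q ^ d" using q by simp
    have "(real (HKF N f z I N w f q) + 1) * real r \<le> (C * real q ^ d + real q ^ d) * real r"
      using h2 h3 by (intro mult_right_mono) auto
    also have "\<dots> = (real r * (C + 1)) * real q ^ d" by (simp add: algebra_simps)
    finally show "real (HKF N f z I T p act q) \<le> (real r * (C + 1)) * real q ^ d" using h1 by linarith
  qed
  then show ?thesis unfolding d_def by blast
qed

end
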